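(* For $n\ge0$ let $Q_n^L(x)=\sum_{r=0}^{n}\left[\binom{n}{r}\sum_{\ell=0}^{r}\binom{r}{\ell}\frac{1}{\ell!}\right](-x)^r$ be the coefficient polynomials of the linear transformation $x^n\mapsto L_n(x)$. Then, as formal power series in $w$, $$\frac{\exp\left(-\frac{wx}{w(x-1)+1}\right)}{w(x-1)+1}=\sum_{n=0}^\infty Q_n^L(x)w^n.$$
   Context: $L_n(x)=\sum_{k=0}^n\binom{n}{k}\frac{(-x)^k}{k!}$ is the $n$th Laguerre polynomial; coefficient polynomials $Q_k$ of a linear operator $T$ on $\mathbb{C}[x]$ are defined by the unique representation $T=\sum_k\frac{Q_k(x)}{k!}D^k$, $D=d/dx$. *)

theory Defs
  imports Complex_Main "HOL-Computational_Algebra.Formal_Power_Series" "HOL-Computational_Algebra.Polynomial"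
begin

definition QL :: "nat \<Rightarrow> complex poly" where
  "QL n = (\<Sum>r=0..n. smult (of_nat (n choose r) * (\<Sum>l=0..r. of_nat (r choose l) / of_nat (fact l))) ([:0, -1:] ^ r))"

end

theory Submission
  imports Defs
begin

unbundle fps_syntax

lemma H_inv:
  fixes x :: complex
  shows "(fps_X * fps_const (x - 1) + 1) * Abs_fps (\<lambda>n. (1 - x)^n) = 1"
proof (rule fps_ext)
  fix n
  show "((fps_X * fps_const (x - 1) + 1) * Abs_fps (\<lambda>n. (1 - x)^n)) $ n = (1::complex fps) $ n"
  proof (cases n)
    case 0 then show ?thesis by simp
  next
    case (Suc m)
    have "((fps_X * fps_const (x - 1) + 1) * Abs_fps (\<lambda>n. (1 - x)^n)) $ n
        = (fps_X * (fps_const (x - 1) * Abs_fps (\<lambda>n. (1 - x)^n))) $ n + (1 - x)^n"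
      by (simp add: algebra_simps)
    also have "\<dots> = (x - 1) * (1-x)^m + (1-x)^Suc m" using Suc by (simp add: fps_X_mult_nth)
    also have "\<dots> = 0" by (simp add: algebra_simps)
    finally show ?thesis using Suc by simp
  qed
qed

lemma choose_swap: "(a + b) choose a = (a + b) choose (b::nat)"
  by (metis add_diff_cancel_left' binomial_symmetric le_add1)

lemma H_pow:
  fixes b :: complex
  shows "(Abs_fps (\<lambda>n. b^n) ^ Suc k) $ m = of_nat ((m + k) choose k) * b ^ m"
proof (induction k arbitrary: m)
  case 0 then show ?case by simp
next
  case (Suc k)
  have "(Abs_fps (\<lambda>n. b^n) ^ Suc (Suc k)) $ m = (\<Sum>i=0..m. b^i * (of_nat ((m - i + k) choose k) * b ^ (m - i)))"
    by (subst power_Suc) (simp only: fps_mult_nth Suc.IH fps_nth_Abs_fps add.commute[of _ k])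
  also have "\<dots> = (\<Sum>i=0..m. of_nat ((m - i + k) choose k)) * b ^ m"
    unfolding sum_distrib_right
  proof (rule sum.cong[OF refl])
    fix i assume "i \<in> {0..m}"
    then have "b^i * b^(m-i) = b^m" by (simp add: power_add[symmetric])
    then show "b ^ i * (of_nat ((m - i + k) choose k) * b ^ (m - i)) = of_nat ((m - i + k) choose k) * b ^ m"
      by (metis mult.left_commute)
  qed
  also have "(\<Sum>i=0..m. of_nat ((m - i + k) choose k)) = (\<Sum>j\<le>m. of_nat ((k + j) choose j) :: complex)"
  proof -
    have "(\<Sum>i=0..m. of_nat ((m - i + k) choose k) :: complex) = (\<Sum>j=0..m. of_nat ((j + k) choose k))"
      by (rule sum.reindex_bij_witness[where i="\<lambda>i. m - i" and j="\<lambda>i. m - i"]) auto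
    also have "\<dots> = (\<Sum>j\<le>m. of_nat ((k + j) choose j))"
      using atMost_atLeast0 by (simp add: choose_swap[of _ k] add.commute)
    finally show ?thesis .
  qed
  also have "\<dots> = of_nat (Suc (k + m) choose m)"
    by (simp only: of_nat_sum[symmetric] sum_choose_lower)
  also have "Suc (k + m) choose m = (m + Suc k) choose Suc k"
    using choose_swap[of m "Suc k"] by (simp add: add.commute)
  finally show ?case by simp
qed

lemma inner_sum:
  fixes c :: complex
  assumes "l \<le> n"
  shows "(\<Sum>r=0..n. of_nat (n choose r) * of_nat (r choose l) * c^r)
       = of_nat (n choose l) * c^l * (1 + c)^(n - l)"
proof -
  have "(\<Sum>r=0..n. of_nat (n choose r) * of_nat (r choose l) * c^r)
      = (\<Sum>r=l..n. of_nat (n choose r) * of_nat (r choose l) * c^r)"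
    by (rule sum.mono_neutral_right) (auto simp: binomial_eq_0)
  also have "\<dots> = (\<Sum>r=l..n. of_nat (n choose l) * (of_nat ((n - l) choose (r - l)) * c^l * c^(r - l)))"
  proof (rule sum.cong[OF refl])
    fix r assume r: "r \<in> {l..n}"
    then have "(n choose r) * (r choose l) = (n choose l) * ((n - l) choose (r - l))"
      by (intro choose_mult) auto
    then have "of_nat (n choose r) * of_nat (r choose l) = (of_nat (n choose l) * of_nat ((n - l) choose (r - l)) :: complex)"
      by (metis of_nat_mult)
    moreover have "c^r = c^l * c^(r-l)" using r by (simp add: power_add[symmetric])
    ultimately show "of_nat (n choose r) * of_nat (r choose l) * c^r = of_nat (n choose l) * (of_nat ((n - l) choose (r - l)) * c^l * c^(r - l))"
      by (simp add: algebra_simps)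
  qed
  also have "\<dots> = of_nat (n choose l) * c^l * (\<Sum>j=0..n-l. of_nat ((n - l) choose j) * c^j)"
    using assms by (simp add: sum.atLeastAtMost_shift_0[of l n] sum_distrib_left algebra_simps comp_def)
  also have "(\<Sum>j=0..n-l. of_nat ((n - l) choose j) * c^j) = (c + 1)^(n - l)"
    by (simp add: binomial_ring atLeast0AtMost)
  finally show ?thesis by (simp add: add.commute)
qed

lemma comb:
  fixes c :: complex
  shows "(\<Sum>r=0..n. of_nat (n choose r) * (\<Sum>l=0..r. of_nat (r choose l) / of_nat (fact l)) * c^r)
       = (\<Sum>l=0..n. of_nat (n choose l) / of_nat (fact l) * c^l * (1 + c)^(n - l))"
proof -
  have "(\<Sum>r=0..n. of_nat (n choose r) * (\<Sum>l=0..r. of_nat (r choose l) / of_nat (fact l)) * c^r)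
      = (\<Sum>r=0..n. \<Sum>l=0..n. of_nat (n choose r) * of_nat (r choose l) * c^r / of_nat (fact l))"
  proof (rule sum.cong[OF refl])
    fix r assume r: "r \<in> {0..n}"
    have "(\<Sum>l=0..r. of_nat (r choose l) / of_nat (fact l)) = (\<Sum>l=0..n. of_nat (r choose l) / (of_nat (fact l) :: complex))"
      using r by (intro sum.mono_neutral_left) (auto simp: binomial_eq_0)
    then show "of_nat (n choose r) * (\<Sum>l=0..r. of_nat (r choose l) / of_nat (fact l)) * c^r
       = (\<Sum>l=0..n. of_nat (n choose r) * of_nat (r choose l) * c^r / of_nat (fact l))"
      by (simp add: sum_distrib_left sum_distrib_right sum_divide_distrib algebra_simps)
  qed
  also have "\<dots> = (\<Sum>l=0..n. \<Sum>r=0..n. of_nat (n choose r) * of_nat (r choose l) * c^r / of_nat (fact l))"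
    by (rule sum.swap)
  also have "\<dots> = (\<Sum>l=0..n. of_nat (n choose l) / of_nat (fact l) * c^l * (1 + c)^(n - l))"
  proof (rule sum.cong[OF refl])
    fix l assume "l \<in> {0..n}"
    then have "l \<le> n" by simp
    have "(\<Sum>r=0..n. of_nat (n choose r) * of_nat (r choose l) * c^r / of_nat (fact l))
        = (\<Sum>r=0..n. of_nat (n choose r) * of_nat (r choose l) * c^r) / of_nat (fact l)"
      by (simp add: sum_divide_distrib)
    also have "\<dots> = of_nat (n choose l) * c^l * (1 + c)^(n - l) / of_nat (fact l)"
      using inner_sum[OF \<open>l \<le> n\<close>] by simp
    finally show "(\<Sum>r=0..n. of_nat (n choose r) * of_nat (r choose l) * c^r / of_nat (fact l))
       = of_nat (n choose l) / of_nat (fact l) * c^l * (1 + c)^(n - l)" by simp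
  qed
  finally show ?thesis .
qed

theorem theorem6p1:
  fixes x :: complex
  shows "(fps_exp 1 oo (- (fps_X * fps_const x) / (fps_X * fps_const (x - 1) + 1)))
           / (fps_X * fps_const (x - 1) + 1)
         = Abs_fps (\<lambda>n. poly (QL n) x)"
proof -
  define D where "D = fps_X * fps_const (x - 1) + (1::complex fps)"
  define b where "b = 1 - x"
  define H where "H = Abs_fps (\<lambda>n. b^n)"
  have DH: "D * H = 1" using H_inv[of x] unfolding D_def H_def b_def .
  have invD: "inverse D = H" using fps_inverse_unique[OF DH] .
  have D0: "D $ 0 \<noteq> 0" by (simp add: D_def)
  define K where "K = fps_const (-x) * H"
  define G where "G = fps_X * K"
  have "- (fps_X * fps_const x) / D = - (fps_X * fps_const x) * inverse D"
    by (rule fps_divide_unit[OF D0])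
  also have "\<dots> = G" unfolding invD G_def K_def
    by (simp add: fps_const_neg[symmetric] algebra_simps del: fps_const_neg)
  finally have G_eq: "- (fps_X * fps_const x) / D = G" .
  define E where "E = fps_exp (1::complex) oo G"
  have L: "E / D = E * H" using fps_divide_unit[OF D0, of E] invD by simp
  have GP: "G^i = fps_X^i * K^i" for i by (simp add: G_def power_mult_distrib)
  have KH: "K^i * H = fps_const ((-x)^i) * H^Suc i" for i
    by (simp add: K_def power_mult_distrib fps_const_power mult.assoc)
  have Gnth: "j < i \<Longrightarrow> (G^i) $ j = 0" for i j by (simp add: GP fps_X_power_mult_nth)
  have main: "(E * H) $ n = poly (QL n) x" for n
  proof -
    define P where "P = (\<Sum>i=0..n. fps_const (1 / of_nat (fact i)) * G^i)"
    have EP: "E $ j = P $ j" if j: "j \<le> n" for j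
    proof -
      have "E $ j = (\<Sum>i=0..j. 1 / of_nat (fact i) * (G^i $ j))"
        by (simp add: E_def fps_compose_nth)
      also have "\<dots> = (\<Sum>i=0..n. 1 / of_nat (fact i) * (G^i $ j))"
        using j by (intro sum.mono_neutral_left) (auto simp: Gnth)
      also have "\<dots> = P $ j" by (simp add: P_def fps_sum_nth)
      finally show ?thesis .
    qed
    have "(E * H) $ n = (P * H) $ n"
      unfolding fps_mult_nth by (rule sum.cong[OF refl]) (simp add: EP)
    also have "\<dots> = (\<Sum>i=0..n. 1 / of_nat (fact i) * ((fps_X^i * (K^i * H)) $ n))"
      by (simp add: P_def sum_distrib_right fps_sum_nth GP mult.assoc)
    also have "\<dots> = (\<Sum>i=0..n. 1 / of_nat (fact i) * ((-x)^i * (of_nat (n choose i) * b^(n-i))))"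
    proof (rule sum.cong[OF refl])
      fix i assume "i \<in> {0..n}"
      then have i: "i \<le> n" by simp
      have "(fps_X^i * (K^i * H)) $ n = (K^i * H) $ (n - i)"
        using i by (simp add: fps_X_power_mult_nth)
      also have "\<dots> = (-x)^i * (H^Suc i $ (n - i))" by (simp add: KH)
      also have "H^Suc i $ (n - i) = of_nat (n choose i) * b^(n-i)"
        unfolding H_def H_pow using i by simp
      finally show "1 / of_nat (fact i) * ((fps_X^i * (K^i * H)) $ n)
          = 1 / of_nat (fact i) * ((-x)^i * (of_nat (n choose i) * b^(n-i)))" by simp
    qed
    also have "\<dots> = (\<Sum>l=0..n. of_nat (n choose l) / of_nat (fact l) * (-x)^l * (1 + (-x))^(n - l))"
      by (intro sum.cong[OF refl]) (simp add: b_def)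
    also have "\<dots> = (\<Sum>r=0..n. of_nat (n choose r) * (\<Sum>l=0..r. of_nat (r choose l) / of_nat (fact l)) * (-x)^r)"
      by (rule comb[symmetric])
    also have "\<dots> = poly (QL n) x"
      by (simp add: QL_def poly_sum poly_power)
    finally show ?thesis .
  qed
  show ?thesis
    unfolding D_def[symmetric] G_eq E_def[symmetric] L
    by (rule fps_ext) (simp add: main)
qed

end
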